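(* Let $\phi:X\to Y$ be a pure morphism of $\mathrm{Agg}^{\rm ctd}$, i.e. a composite of virtual edge and virtual loop contractions. Then $X$ may be identified with the total dissection $\mathrm{agg}(\mathbb{\Gamma}(\phi))$, $Y$ with the total contraction $\mathbb{\Gamma}(\phi)/\mathbb{\Gamma}(\phi)$, and $\phi$ with $\mathrm v_{\mathbb{\Gamma}(\phi)}=c_{\mathbb{\Gamma}(\phi)}\circ i_{\mathbb{\Gamma}(\phi)}$. Consequently any pure morphism of $\mathrm{Agg}^{\rm ctd}$ is uniquely determined by its ghost graph.
   Context: A graph $\Gamma=(F,V,\partial,\imath)$ consists of finite sets $F$ (flags) and $V$ (vertices), a map $\partial:F\to V$ and an involution $\imath$ of $F$. The two-element orbits of $\imath$ are the edges, the fixed points the outer flags. A graph morphism $\phi:\Gamma\to\Gamma'=(F',V',\partial',\imath')$ is a triple $(\phi_V,\phi^F,\imath_\phi)$ with $\phi_V:V\to V'$ surjective, $\phi^F:F'\to F$ injective and $\imath_\phi$ a fixed-point-free involution of $F\setminus\phi^F(F')$, such that: (i) $\phi_V\partial\phi^F=\partial'$ and $\phi_V\partial(f)=\phi_V\partial(\imath_\phi f)$ for $f\notin\phi^F(F')$; (ii) for $f\notin\phi^F(F')$, either $\{f,\imath f\}$ is an edge of $\Gamma$ and $\imath_\phi f=\imath f$, or $f$ and $\imath_\phi f$ are both outer flags of $\Gamma$; (iii) if $f'\in F'$ and $\phi^F(f')$ lies on an edge of $\Gamma$, then $\imath(\phi^F f')=\phi^F(\imath' f')$. Composition: $(\psi\phi)_V=\psi_V\phi_V$,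 $(\psi\phi)^F=\phi^F\psi^F$, $\imath_{\psi\phi}$ equals $\imath_\phi$ off $\phi^F(F')$ and $\phi^F\imath_\psi(\phi^F)^{-1}$ on $\phi^F(F'\setminus\psi^F(F''))$. The ghost graph of $\phi$ is $\mathbb{\Gamma}(\phi)=(F,V,\partial,\hat\imath_\phi)$, $\hat\imath_\phi$ extending $\imath_\phi$ by the identity on $\phi^F(F')$. A corolla $*_S$ has one vertex, flag set $S$, no edges; an aggregate is a graph with $\imath=\mathrm{id}$. The simple grafting of distinct outer flags $s,t$ is $(\mathrm{id},\mathrm{id},\emptyset)$ into the graph whose involution additionally exchanges $s,t$; the simple contraction $c_{\{s,t\}}$ of an edge is (quotient $V\to V/(\partial s\sim\partial t)$, inclusion $F\setminus\{s,t\}\hookrightarrow F$, $\imath_\phi(s)=t$). For distinct outer flags $s,t$ of an aggregate, the virtual edge contraction ${}_s\circ_t$ ($\partial s\ne\partial t$) resp. virtual loop contraction $\circ_{st}$ ($\partial s=\partial t$) is $c_{\{s,t\}}$ composed after the grafting of $s,t$. $\mathrm{Agg}^{\rm ctd}$ is the category of aggregates with morphisms generated by isomorphisms and virtual edge/loop contractions. For a graph $\Gamma$: the total dissection is $\mathrm{agg}(\Gamma)=(F,V,\partial,\mathrm{id})$; the total contraction $\Gamma/\Gamma$ is the aggregate whose vertices are the connected components of $\Gamma$ and whose flags are the outer flags of $\Gamma$, each attached to its component; $i_\Gamma:\mathrm{agg}(\Gamma)\to\Gamma$ is the composite of graftings of all edges, $c_\Gamma:\Gamma\to\Gamma/\Gamma$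 the composite of contractions of all edges, and $\mathrm v_\Gamma=c_\Gamma i_\Gamma$. *)

theory Defs
  imports Main
begin

text \<open>A graph is given by carrier sets of flags and vertices inside ambient types,
  together with the boundary map and the involution; only the values of the maps on
  the carriers are relevant.\<close>

record ('f, 'v) graph =
  flags :: "'f set"
  verts :: "'v set"
  bd    :: "'f \<Rightarrow> 'v"
  inv   :: "'f \<Rightarrow> 'f"

definition wf_graph :: "('f, 'v) graph \<Rightarrow> bool" where
  "wf_graph G \<longleftrightarrow> finite (flags G) \<and> finite (verts G)
     \<and> (\<forall>f\<in>flags G. bd G f \<in> verts G)
     \<and> (\<forall>f\<in>flags G. inv G f \<in> flags G \<and> inv G (inv G f) = f)"

definition graph_eq :: "('f, 'v) graph \<Rightarrow> ('f, 'v) graph \<Rightarrow> bool" where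
  "graph_eq G H \<longleftrightarrow> flags G = flags H \<and> verts G = verts H
     \<and> (\<forall>f\<in>flags G. bd G f = bd H f \<and> inv G f = inv H f)"

definition aggregate :: "('f, 'v) graph \<Rightarrow> bool" where
  "aggregate G \<longleftrightarrow> wf_graph G \<and> (\<forall>f\<in>flags G. inv G f = f)"

text \<open>A morphism \<open>\<Gamma> \<rightarrow> \<Gamma>'\<close> is a triple \<open>(\<phi>_V, \<phi>^F, \<iota>_\<phi>)\<close>; \<open>\<phi>^F\<close> goes
  contravariantly from the flags of \<open>\<Gamma>'\<close> to those of \<open>\<Gamma>\<close>.\<close>

record ('v, 'w, 'f, 'g) morph =
  mV :: "'v \<Rightarrow> 'w"
  mF :: "'g \<Rightarrow> 'f"
  mi :: "'f \<Rightarrow> 'f"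

definition is_morph :: "('f, 'v) graph \<Rightarrow> ('g, 'w) graph \<Rightarrow> ('v, 'w, 'f, 'g) morph \<Rightarrow> bool" where
  "is_morph X Y \<phi> \<longleftrightarrow> wf_graph X \<and> wf_graph Y
     \<and> mV \<phi> ` verts X = verts Y
     \<and> mF \<phi> ` flags Y \<subseteq> flags X \<and> inj_on (mF \<phi>) (flags Y)
     \<and> (\<forall>f \<in> flags X - mF \<phi> ` flags Y.
           mi \<phi> f \<in> flags X - mF \<phi> ` flags Y \<and> mi \<phi> f \<noteq> f \<and> mi \<phi> (mi \<phi> f) = f)
     \<and> (\<forall>f'\<in>flags Y. mV \<phi> (bd X (mF \<phi> f')) = bd Y f')
     \<and> (\<forall>f \<in> flags X - mF \<phi> ` flags Y. mV \<phi> (bd X f) = mV \<phi> (bd X (mi \<phi> f)))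
     \<and> (\<forall>f \<in> flags X - mF \<phi> ` flags Y.
           (inv X f \<noteq> f \<and> mi \<phi> f = inv X f) \<or> (inv X f = f \<and> inv X (mi \<phi> f) = mi \<phi> f))
     \<and> (\<forall>f'\<in>flags Y. inv X (mF \<phi> f') \<noteq> mF \<phi> f' \<longrightarrow> inv X (mF \<phi> f') = mF \<phi> (inv Y f'))"

definition morph_eq :: "('f, 'v) graph \<Rightarrow> ('g, 'w) graph
     \<Rightarrow> ('v, 'w, 'f, 'g) morph \<Rightarrow> ('v, 'w, 'f, 'g) morph \<Rightarrow> bool" where
  "morph_eq X Y \<phi> \<psi> \<longleftrightarrow> (\<forall>v\<in>verts X. mV \<phi> v = mV \<psi> v)
     \<and> (\<forall>f\<in>flags Y. mF \<phi> f = mF \<psi> f)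
     \<and> (\<forall>f\<in>flags X - mF \<phi> ` flags Y. mi \<phi> f = mi \<psi> f)"

text \<open>Composition \<open>\<psi> \<circ> \<phi>\<close> for \<open>\<phi> : X \<rightarrow> Y\<close>, \<open>\<psi> : Y \<rightarrow> Z\<close>; the first argument is the
  flag set of the middle graph \<open>Y\<close>.\<close>
definition mcomp :: "'g set \<Rightarrow> ('w, 'u, 'g, 'h) morph \<Rightarrow> ('v, 'w, 'f, 'g) morph
     \<Rightarrow> ('v, 'u, 'f, 'h) morph" where
  "mcomp FY \<psi> \<phi> = \<lparr> mV = mV \<psi> \<circ> mV \<phi>, mF = mF \<phi> \<circ> mF \<psi>,
     mi = (\<lambda>f. if f \<in> mF \<phi> ` FY then mF \<phi> (mi \<psi> (inv_into FY (mF \<phi>) f)) else mi \<phi> f) \<rparr>"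

definition id_morph :: "('v, 'v, 'f, 'f) morph" where
  "id_morph = \<lparr> mV = id, mF = id, mi = id \<rparr>"

definition is_iso :: "('f, 'v) graph \<Rightarrow> ('g, 'w) graph \<Rightarrow> ('v, 'w, 'f, 'g) morph \<Rightarrow> bool" where
  "is_iso X Y \<phi> \<longleftrightarrow> is_morph X Y \<phi>
     \<and> bij_betw (mV \<phi>) (verts X) (verts Y) \<and> bij_betw (mF \<phi>) (flags Y) (flags X)"

definition ghost :: "('f, 'v) graph \<Rightarrow> ('g, 'w) graph \<Rightarrow> ('v, 'w, 'f, 'g) morph \<Rightarrow> ('f, 'v) graph" where
  "ghost X Y \<phi> = \<lparr> flags = flags X, verts = verts X, bd = bd X,
      inv = (\<lambda>f. if f \<in> mF \<phi> ` flags Y then f else mi \<phi> f) \<rparr>"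

text \<open>The virtual (edge or loop) contraction of two distinct outer flags \<open>s, t\<close> of an
  aggregate \<open>X\<close>: the composite of the grafting of \<open>s,t\<close> and the simple contraction of the
  resulting edge. This is the morphism \<open>(q, F - {s,t} \<hookrightarrow> F, s \<leftrightarrow> t)\<close> where \<open>q\<close> is the
  quotient map \<open>V \<rightarrow> V/(\<partial>s \<sim> \<partial>t)\<close>. Since the target vertex set lives in a fixed type,
  the quotient is given by any realisation \<open>q\<close> of it (i.e. determined up to the
  unique vertex bijection).\<close>
definition virt_contr :: "('f, 'v) graph \<Rightarrow> ('f, 'v) graph \<Rightarrow> ('v, 'v, 'f, 'f) morph
     \<Rightarrow> 'f \<Rightarrow> 'f \<Rightarrow> bool" where
  "virt_contr X Y \<phi> s t \<longleftrightarrow> aggregate X \<and> aggregate Y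
     \<and> s \<in> flags X \<and> t \<in> flags X \<and> s \<noteq> t
     \<and> flags Y = flags X - {s, t}
     \<and> mV \<phi> ` verts X = verts Y
     \<and> (\<forall>x\<in>verts X. \<forall>y\<in>verts X. mV \<phi> x = mV \<phi> y \<longleftrightarrow>
           x = y \<or> {x, y} = {bd X s, bd X t})
     \<and> (\<forall>f\<in>flags Y. bd Y f = mV \<phi> (bd X f))
     \<and> (\<forall>f\<in>flags Y. mF \<phi> f = f)
     \<and> mi \<phi> s = t \<and> mi \<phi> t = s"

inductive pure :: "('f, 'v) graph \<Rightarrow> ('f, 'v) graph \<Rightarrow> ('v, 'v, 'f, 'f) morph \<Rightarrow> bool" where
  pure_id: "aggregate X \<Longrightarrow> pure X X id_morph"
| pure_step: "virt_contr X Y \<phi> s t \<Longrightarrow> pure Y Z \<psi> \<Longrightarrow> pure X Z (mcomp (flags Y) \<psi> \<phi>)"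

definition agg :: "('f, 'v) graph \<Rightarrow> ('f, 'v) graph" where
  "agg G = \<lparr> flags = flags G, verts = verts G, bd = bd G, inv = id \<rparr>"

definition adj :: "('f, 'v) graph \<Rightarrow> ('v \<times> 'v) set" where
  "adj G = {(bd G f, bd G (inv G f)) | f. f \<in> flags G}"

definition component :: "('f, 'v) graph \<Rightarrow> 'v \<Rightarrow> 'v set" where
  "component G v = {w \<in> verts G. (v, w) \<in> (adj G)\<^sup>*}"

definition tot_contr :: "('f, 'v) graph \<Rightarrow> ('f, 'v set) graph" where
  "tot_contr G = \<lparr> flags = {f \<in> flags G. inv G f = f},
      verts = component G ` verts G,
      bd = (\<lambda>f. component G (bd G f)), inv = id \<rparr>"

text \<open>\<open>i_\<Gamma> : agg(\<Gamma>) \<rightarrow> \<Gamma>\<close>, the composite of graftings of all edges, is \<open>(id, id, \<emptyset>)\<close>.\<close>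
definition i_morph :: "('f, 'v) graph \<Rightarrow> ('v, 'v, 'f, 'f) morph" where
  "i_morph G = \<lparr> mV = id, mF = id, mi = id \<rparr>"

text \<open>\<open>c_\<Gamma> : \<Gamma> \<rightarrow> \<Gamma>/\<Gamma>\<close>, the composite of contractions of all edges: vertices go to
  their components, outer flags include into all flags, and \<open>\<iota>_c = \<iota>\<close> on edge flags.\<close>
definition c_morph :: "('f, 'v) graph \<Rightarrow> ('v, 'v set, 'f, 'f) morph" where
  "c_morph G = \<lparr> mV = component G, mF = id, mi = inv G \<rparr>"

definition v_morph :: "('f, 'v) graph \<Rightarrow> ('v, 'v set, 'f, 'f) morph" where
  "v_morph G = mcomp (flags G) (c_morph G) (i_morph G)"

end

theory Submission
  imports Defs
begin

definition Rel :: "('f, 'v) graph \<Rightarrow> ('f, 'v) graph \<Rightarrow> ('v, 'v, 'f, 'f) morph \<Rightarrow> ('v \<times> 'v) set" where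
  "Rel X Y \<phi> = {(bd X f, bd X (mi \<phi> f)) | f. f \<in> flags X - flags Y}"

lemma ker_rt:
  assumes ker: "\<forall>x\<in>A. \<forall>y\<in>A. q x = q y \<longleftrightarrow> x = y \<or> {x,y} = {a,b}"
    and "x \<in> A" "y \<in> A" "q x = q y"
  shows "(x,y) \<in> (S \<union> {(a,b),(b,a)})\<^sup>*"
proof -
  from ker assms(2-4) have "x = y \<or> {x,y} = {a,b}" by blast
  then show ?thesis
  proof
    assume "x = y" then show ?thesis by simp
  next
    assume "{x,y} = {a,b}"
    then have "(x = a \<and> y = b) \<or> (x = b \<and> y = a)" by (auto simp: doubleton_eq_iff)
    then show ?thesis by (auto intro: r_into_rtrancl)
  qed
qed

lemma quot_rtrancl:
  assumes ker: "\<forall>x\<in>A. \<forall>y\<in>A. q x = q y \<longleftrightarrow> x = y \<or> {x,y} = {a,b}"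
    and ab: "a \<in> A" "b \<in> A" and SA: "S \<subseteq> A \<times> A" and xy: "x \<in> A" "y \<in> A"
  shows "(q x, q y) \<in> ((\<lambda>(u,v). (q u, q v)) ` S)\<^sup>* \<longleftrightarrow> (x,y) \<in> (S \<union> {(a,b),(b,a)})\<^sup>*"
proof
  let ?U = "S \<union> {(a,b),(b,a)}"
  let ?T = "(\<lambda>(u,v). (q u, q v)) ` S"
  have "\<forall>y\<in>A. q y = w \<longrightarrow> (x,y) \<in> ?U\<^sup>*" if "(q x, w) \<in> ?T\<^sup>*" for w
    using that
  proof (induction rule: rtrancl_induct)
    case base
    then show ?case using ker_rt[OF ker xy(1), where S=S] by (metis)
  next
    case (step w w')
    from step.hyps(2) obtain u u' where uu: "(u,u') \<in> S" "w = q u" "w' = q u'" by auto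
    with SA have uA: "u \<in> A" "u' \<in> A" by auto
    with step.IH uu have "(x,u) \<in> ?U\<^sup>*" by blast
    moreover have "(u,u') \<in> ?U" using uu by blast
    ultimately have xu': "(x,u') \<in> ?U\<^sup>*" by (rule rtrancl_into_rtrancl)
    show ?case
    proof (intro ballI impI)
      fix z assume "z \<in> A" "q z = w'"
      then have "(u',z) \<in> ?U\<^sup>*" using ker_rt[OF ker uA(2), of z] uu by simp
      with xu' show "(x,z) \<in> ?U\<^sup>*" by (rule rtrancl_trans)
    qed
  qed
  then show "(q x, q y) \<in> ?T\<^sup>* \<Longrightarrow> (x,y) \<in> ?U\<^sup>*" using xy by blast
next
  let ?U = "S \<union> {(a,b),(b,a)}"
  let ?T = "(\<lambda>(u,v). (q u, q v)) ` S"
  have qab: "q a = q b" using ker ab by blast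
  assume "(x,y) \<in> ?U\<^sup>*"
  then show "(q x, q y) \<in> ?T\<^sup>*"
  proof (induction rule: rtrancl_induct)
    case base then show ?case by simp
  next
    case (step u u')
    show ?case
    proof (cases "(u,u') \<in> S")
      case True
      then have "(q u, q u') \<in> ?T" by force
      with step.IH show ?thesis by (rule rtrancl_into_rtrancl)
    next
      case False
      with step.hyps(2) have "q u = q u'" using qab by auto
      with step.IH show ?thesis by simp
    qed
  qed
qed

lemma pure_props:
  assumes "pure X Y \<phi>"
  shows "aggregate X \<and> aggregate Y \<and> flags Y \<subseteq> flags X
    \<and> (\<forall>f\<in>flags Y. mF \<phi> f = f)
    \<and> (\<forall>f\<in>flags X - flags Y. mi \<phi> f \<in> flags X \<and> mi \<phi> f \<noteq> f)
    \<and> (\<forall>f\<in>flags Y. bd Y f = mV \<phi> (bd X f))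
    \<and> mV \<phi> ` verts X = verts Y
    \<and> (\<forall>x\<in>verts X. \<forall>y\<in>verts X. mV \<phi> x = mV \<phi> y \<longleftrightarrow> (x,y) \<in> (Rel X Y \<phi>)\<^sup>*)"
  using assms
proof (induction rule: pure.induct)
  case (pure_id X)
  have "Rel X X id_morph = {}" by (simp add: Rel_def)
  with pure_id show ?case by (simp add: id_morph_def)
next
  case (pure_step X Y \<phi> s t Z \<psi>)
  let ?th = "mcomp (flags Y) \<psi> \<phi>"
  from pure_step.hyps(1) have vc:
    "aggregate X" "aggregate Y" "s \<in> flags X" "t \<in> flags X" "s \<noteq> t"
    "flags Y = flags X - {s, t}" "mV \<phi> ` verts X = verts Y"
    "\<forall>x\<in>verts X. \<forall>y\<in>verts X. mV \<phi> x = mV \<phi> y \<longleftrightarrow> x = y \<or> {x, y} = {bd X s, bd X t}"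
    "\<forall>f\<in>flags Y. bd Y f = mV \<phi> (bd X f)" "\<forall>f\<in>flags Y. mF \<phi> f = f"
    "mi \<phi> s = t" "mi \<phi> t = s"
    unfolding virt_contr_def by auto
  have IHa: "aggregate Y" "aggregate Z" "flags Z \<subseteq> flags Y"
    "\<forall>f\<in>flags Z. mF \<psi> f = f"
    "\<forall>f\<in>flags Y - flags Z. mi \<psi> f \<in> flags Y \<and> mi \<psi> f \<noteq> f"
    "\<forall>f\<in>flags Z. bd Z f = mV \<psi> (bd Y f)"
    "mV \<psi> ` verts Y = verts Z"
    "\<forall>x\<in>verts Y. \<forall>y\<in>verts Y. mV \<psi> x = mV \<psi> y \<longleftrightarrow> (x,y) \<in> (Rel Y Z \<psi>)\<^sup>*"
    using pure_step.IH by simp_all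
  note IH = IHa
  have wfX: "wf_graph X" using vc(1) by (simp add: aggregate_def)
  have ZY: "flags Z \<subseteq> flags Y" using IH(3) .
  have imgY: "mF \<phi> ` flags Y = flags Y" using vc(10) by (simp add: image_cong)
  have injY: "inj_on (mF \<phi>) (flags Y)" using vc(10) by (simp add: inj_on_def)
  have invY: "inv_into (flags Y) (mF \<phi>) f = f" if "f \<in> flags Y" for f
    using inv_into_f_eq[OF injY that] vc(10) that by simp
  have miYZ: "mi ?th f = mi \<psi> f" if "f \<in> flags Y - flags Z" for f
  proof -
    have "mi \<psi> f \<in> flags Y" using IH(5) that by blast
    then show ?thesis using that imgY invY vc(10) by (simp add: mcomp_def)
  qed
  have sY: "s \<notin> flags Y" "t \<notin> flags Y" using vc(6) by auto
  have mis: "mi ?th s = t" "mi ?th t = s" using sY imgY vc(11,12) by (simp_all add: mcomp_def)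
  have XZ: "flags X - flags Z = {s,t} \<union> (flags Y - flags Z)" using vc(3,4,6) ZY by auto
  have p1: "flags Z \<subseteq> flags X" using ZY vc(6) by auto
  have p2: "\<forall>f\<in>flags Z. mF ?th f = f" using IH(4) ZY vc(10) by (auto simp: mcomp_def)
  have p3: "\<forall>f\<in>flags X - flags Z. mi ?th f \<in> flags X \<and> mi ?th f \<noteq> f"
  proof
    fix f assume "f \<in> flags X - flags Z"
    then have "f \<in> {s,t} \<or> f \<in> flags Y - flags Z" using XZ by blast
    then show "mi ?th f \<in> flags X \<and> mi ?th f \<noteq> f"
    proof
      assume "f \<in> {s,t}" then show ?thesis using mis vc(3,4,5) by auto
    next
      assume f: "f \<in> flags Y - flags Z"
      then show ?thesis using miYZ[OF f] IH(5) vc(6) by auto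
    qed
  qed
  have p4: "\<forall>f\<in>flags Z. bd Z f = mV ?th (bd X f)"
    using IH(6) ZY vc(9) by (auto simp: mcomp_def)
  have p5: "mV ?th ` verts X = verts Z"
    using IH(7) vc(7) by (simp add: mcomp_def image_image[symmetric])
  define S where "S = {(bd X f, bd X (mi \<psi> f)) | f. f \<in> flags Y - flags Z}"
  have SA: "S \<subseteq> verts X \<times> verts X"
  proof -
    have "bd X f \<in> verts X \<and> bd X (mi \<psi> f) \<in> verts X" if "f \<in> flags Y - flags Z" for f
    proof -
      have "f \<in> flags X" "mi \<psi> f \<in> flags X" using that IH(5) vc(6) by auto
      then show ?thesis using wfX by (simp add: wf_graph_def)
    qed
    then show ?thesis unfolding S_def by blast
  qed
  have RelZ: "Rel X Z ?th = S \<union> {(bd X s, bd X t), (bd X t, bd X s)}"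
  proof -
    have "Rel X Z ?th = {(bd X f, bd X (mi ?th f)) | f. f \<in> {s,t} \<union> (flags Y - flags Z)}"
      unfolding Rel_def XZ ..
    also have "\<dots> = {(bd X f, bd X (mi ?th f)) | f. f \<in> {s,t}} \<union> {(bd X f, bd X (mi ?th f)) | f. f \<in> flags Y - flags Z}"
      by blast
    also have "{(bd X f, bd X (mi ?th f)) | f. f \<in> flags Y - flags Z} = S"
      unfolding S_def using miYZ by force
    also have "{(bd X f, bd X (mi ?th f)) | f. f \<in> {s,t}} = {(bd X s, bd X t), (bd X t, bd X s)}"
      using mis by auto
    finally show ?thesis by blast
  qed
  have RelY: "Rel Y Z \<psi> = (\<lambda>(u,v). (mV \<phi> u, mV \<phi> v)) ` S"
  proof -
    have "Rel Y Z \<psi> = {(mV \<phi> (bd X f), mV \<phi> (bd X (mi \<psi> f))) | f. f \<in> flags Y - flags Z}"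
    proof -
      have eq: "(bd Y f, bd Y (mi \<psi> f)) = (mV \<phi> (bd X f), mV \<phi> (bd X (mi \<psi> f)))"
        if "f \<in> flags Y - flags Z" for f
      proof -
        have "f \<in> flags Y" "mi \<psi> f \<in> flags Y" using IH(5) that by auto
        then show ?thesis using vc(9) by simp
      qed
      show ?thesis unfolding Rel_def by (rule Collect_cong) (metis eq)
    qed
    also have "\<dots> = (\<lambda>(u,v). (mV \<phi> u, mV \<phi> v)) ` S" unfolding S_def by auto
    finally show ?thesis .
  qed
  have abA: "bd X s \<in> verts X" "bd X t \<in> verts X" using wfX vc(3,4) by (auto simp: wf_graph_def)
  have p6: "\<forall>x\<in>verts X. \<forall>y\<in>verts X. mV ?th x = mV ?th y \<longleftrightarrow> (x,y) \<in> (Rel X Z ?th)\<^sup>*"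
  proof (intro ballI)
    fix x y assume xy: "x \<in> verts X" "y \<in> verts X"
    then have "mV \<phi> x \<in> verts Y" "mV \<phi> y \<in> verts Y" using vc(7) by auto
    then have "mV \<psi> (mV \<phi> x) = mV \<psi> (mV \<phi> y) \<longleftrightarrow> (mV \<phi> x, mV \<phi> y) \<in> (Rel Y Z \<psi>)\<^sup>*"
      using IH(8) by blast
    also have "\<dots> \<longleftrightarrow> (x,y) \<in> (Rel X Z ?th)\<^sup>*"
      unfolding RelY RelZ by (rule quot_rtrancl[OF vc(8) abA SA xy])
    finally show "mV ?th x = mV ?th y \<longleftrightarrow> (x,y) \<in> (Rel X Z ?th)\<^sup>*" by (simp add: mcomp_def)
  qed
  show ?case by (rule conjI vc(1) IH(2) p1 p2 p3 p4 p5 p6)+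
qed


lemmas pp_aggX = pure_props[THEN conjunct1]
lemmas pp_aggY = pure_props[THEN conjunct2, THEN conjunct1]
lemmas pp_sub = pure_props[THEN conjunct2, THEN conjunct2, THEN conjunct1]
lemmas pp_mF = pure_props[THEN conjunct2, THEN conjunct2, THEN conjunct2, THEN conjunct1]
lemmas pp_mi = pure_props[THEN conjunct2, THEN conjunct2, THEN conjunct2, THEN conjunct2, THEN conjunct1]
lemmas pp_bd = pure_props[THEN conjunct2, THEN conjunct2, THEN conjunct2, THEN conjunct2, THEN conjunct2, THEN conjunct1]
lemmas pp_img = pure_props[THEN conjunct2, THEN conjunct2, THEN conjunct2, THEN conjunct2, THEN conjunct2, THEN conjunct2, THEN conjunct1]
lemmas pp_key = pure_props[THEN conjunct2, THEN conjunct2, THEN conjunct2, THEN conjunct2, THEN conjunct2, THEN conjunct2, THEN conjunct2]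

lemma pure_img:
  assumes "pure X Y \<phi>" shows "mF \<phi> ` flags Y = flags Y"
  using pp_mF[OF assms] by (simp add: image_cong)

lemma ghost_inv:
  assumes "pure X Y \<phi>" "f \<in> flags X"
  shows "inv (ghost X Y \<phi>) f = (if f \<in> flags Y then f else mi \<phi> f)"
  using pure_img[OF assms(1)] by (simp add: ghost_def)

lemma ghost_fix:
  assumes "pure X Y \<phi>" "f \<in> flags X"
  shows "inv (ghost X Y \<phi>) f = f \<longleftrightarrow> f \<in> flags Y"
proof -
  have "\<forall>f\<in>flags X - flags Y. mi \<phi> f \<in> flags X \<and> mi \<phi> f \<noteq> f"
    using pp_mi[OF assms(1)] .
  then show ?thesis using ghost_inv[OF assms] assms(2) by auto
qed

lemma ghost_adj:
  assumes "pure X Y \<phi>"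
  shows "(adj (ghost X Y \<phi>))\<^sup>* = (Rel X Y \<phi>)\<^sup>*"
proof -
  let ?G = "ghost X Y \<phi>"
  have a1: "adj ?G \<subseteq> (Rel X Y \<phi>)\<^sup>="
  proof
    fix p assume "p \<in> adj ?G"
    then obtain f where f: "f \<in> flags X" "p = (bd X f, bd X (inv ?G f))"
      by (auto simp: adj_def ghost_def)
    show "p \<in> (Rel X Y \<phi>)\<^sup>="
    proof (cases "f \<in> flags Y")
      case True then show ?thesis using f ghost_inv[OF assms f(1)] by simp
    next
      case False then show ?thesis using f ghost_inv[OF assms f(1)] by (auto simp: Rel_def)
    qed
  qed
  have a2: "Rel X Y \<phi> \<subseteq> adj ?G"
  proof
    fix p assume "p \<in> Rel X Y \<phi>"
    then obtain f where f: "f \<in> flags X" "f \<notin> flags Y" "p = (bd X f, bd X (mi \<phi> f))"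
      by (auto simp: Rel_def)
    then have "p = (bd ?G f, bd ?G (inv ?G f))" using ghost_inv[OF assms f(1)] by (simp add: ghost_def)
    moreover have "f \<in> flags ?G" using f by (simp add: ghost_def)
    ultimately show "p \<in> adj ?G" by (auto simp: adj_def)
  qed
  have "(adj ?G)\<^sup>* \<subseteq> (Rel X Y \<phi>)\<^sup>*"
    using rtrancl_mono[OF a1] by simp
  moreover have "(Rel X Y \<phi>)\<^sup>* \<subseteq> (adj ?G)\<^sup>*" using rtrancl_mono[OF a2] .
  ultimately show ?thesis by blast
qed

lemma ghost_comp:
  assumes "pure X Y \<phi>" "v \<in> verts X"
  shows "component (ghost X Y \<phi>) v = {w \<in> verts X. mV \<phi> v = mV \<phi> w}"
proof -
  have key: "\<forall>x\<in>verts X. \<forall>y\<in>verts X. mV \<phi> x = mV \<phi> y \<longleftrightarrow> (x,y) \<in> (Rel X Y \<phi>)\<^sup>*"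
    using pp_key[OF assms(1)] .
  show ?thesis unfolding component_def ghost_adj[OF assms(1)]
    using key assms(2) by (auto simp: ghost_def)
qed


lemma part1:
  assumes "pure X Y \<phi>"
  shows "graph_eq X (agg (ghost X Y \<phi>))"
  using pp_aggX[OF assms] by (simp add: graph_eq_def agg_def ghost_def aggregate_def)

lemma part2:
  assumes P: "pure X Y \<phi>"
  shows "\<exists>\<psi> :: ('v set, 'v, 'f, 'f) morph.
            is_iso (tot_contr (ghost X Y \<phi>)) Y \<psi>
          \<and> morph_eq X Y \<phi> (mcomp (flags (tot_contr (ghost X Y \<phi>))) \<psi> (v_morph (ghost X Y \<phi>)))"
proof -
  let ?G = "ghost X Y \<phi>"
  let ?T = "tot_contr ?G"
  define \<psi> :: "('v set, 'v, 'f, 'f) morph" where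
    "\<psi> = \<lparr> mV = \<lambda>C. mV \<phi> (SOME x. x \<in> C), mF = id, mi = id \<rparr>"
  have aggX: "aggregate X" and aggY: "aggregate Y" using pp_aggX[OF P] pp_aggY[OF P] .
  have wfX: "wf_graph X" and wfY: "wf_graph Y" using aggX aggY by (auto simp: aggregate_def)
  have sub: "flags Y \<subseteq> flags X" using pp_sub[OF P] .
  have mFid: "\<forall>f\<in>flags Y. mF \<phi> f = f" using pp_mF[OF P] .
  have bdY: "\<forall>f\<in>flags Y. bd Y f = mV \<phi> (bd X f)" using pp_bd[OF P] .
  have img: "mV \<phi> ` verts X = verts Y" using pp_img[OF P] .
  have fG: "flags ?G = flags X" by (simp add: ghost_def)
  have "flags ?T = {f \<in> flags ?G. inv ?G f = f}" by (simp add: tot_contr_def)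
  then have fT: "flags ?T = flags Y"
    using ghost_fix[OF P] sub unfolding fG by auto
  have vT: "verts ?T = component ?G ` verts X" by (simp add: tot_contr_def ghost_def)
  have bdT: "bd ?T f = component ?G (bd X f)" for f by (simp add: tot_contr_def ghost_def)
  have invT: "inv ?T = id" by (simp add: tot_contr_def)
  have star: "mV \<psi> (component ?G v) = mV \<phi> v" if "v \<in> verts X" for v
  proof -
    have "v \<in> component ?G v" using ghost_comp[OF P that] that by simp
    then have "(SOME x. x \<in> component ?G v) \<in> component ?G v" by (rule someI)
    then show ?thesis using ghost_comp[OF P that] by (simp add: \<psi>_def)
  qed
  have bdX: "bd X f \<in> verts X" if "f \<in> flags X" for f using wfX that by (simp add: wf_graph_def)
  have wfT: "wf_graph ?T"
    unfolding wf_graph_def fT vT invT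
    using wfX sub bdX by (auto simp: bdT wf_graph_def intro: finite_subset)
  have imgT: "mV \<psi> ` verts ?T = verts Y"
    unfolding vT image_image using star img by (metis (no_types, lifting) image_cong)
  have injT: "inj_on (mV \<psi>) (verts ?T)"
  proof (rule inj_onI)
    fix C D assume "C \<in> verts ?T" "D \<in> verts ?T" "mV \<psi> C = mV \<psi> D"
    then obtain v w where vw: "v \<in> verts X" "w \<in> verts X" "C = component ?G v" "D = component ?G w"
      "mV \<psi> C = mV \<psi> D" unfolding vT by auto
    then have "mV \<phi> v = mV \<phi> w" using star by simp
    then show "C = D" using vw ghost_comp[OF P vw(1)] ghost_comp[OF P vw(2)] by simp
  qed
  have morph: "is_morph ?T Y \<psi>"
    unfolding is_morph_def
  proof (intro conjI)
    show "wf_graph ?T" by (rule wfT)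
    show "wf_graph Y" by (rule wfY)
    show "mV \<psi> ` verts ?T = verts Y" by (rule imgT)
    show "mF \<psi> ` flags Y \<subseteq> flags ?T" using fT by (simp add: \<psi>_def)
    show "inj_on (mF \<psi>) (flags Y)" by (simp add: \<psi>_def)
    show "\<forall>f\<in>flags ?T - mF \<psi> ` flags Y. mi \<psi> f \<in> flags ?T - mF \<psi> ` flags Y \<and> mi \<psi> f \<noteq> f \<and> mi \<psi> (mi \<psi> f) = f"
      using fT by (simp add: \<psi>_def)
    show "\<forall>f'\<in>flags Y. mV \<psi> (bd ?T (mF \<psi> f')) = bd Y f'"
      using star bdX sub bdY by (auto simp: bdT \<psi>_def)
    show "\<forall>f\<in>flags ?T - mF \<psi> ` flags Y. mV \<psi> (bd ?T f) = mV \<psi> (bd ?T (mi \<psi> f))"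
      using fT by (simp add: \<psi>_def)
    show "\<forall>f\<in>flags ?T - mF \<psi> ` flags Y. (inv ?T f \<noteq> f \<and> mi \<psi> f = inv ?T f) \<or> (inv ?T f = f \<and> inv ?T (mi \<psi> f) = mi \<psi> f)"
      using fT by (simp add: \<psi>_def)
    show "\<forall>f'\<in>flags Y. inv ?T (mF \<psi> f') \<noteq> mF \<psi> f' \<longrightarrow> inv ?T (mF \<psi> f') = mF \<psi> (inv Y f')"
      using invT by simp
  qed
  have iso: "is_iso ?T Y \<psi>"
    unfolding is_iso_def using morph injT imgT fT
    by (simp add: bij_betw_def \<psi>_def)
  have meq: "morph_eq X Y \<phi> (mcomp (flags ?T) \<psi> (v_morph ?G))"
    unfolding morph_eq_def
  proof (intro conjI ballI)
    fix v assume "v \<in> verts X"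
    then show "mV \<phi> v = mV (mcomp (flags ?T) \<psi> (v_morph ?G)) v"
      using star by (simp add: mcomp_def v_morph_def c_morph_def i_morph_def)
  next
    fix f assume "f \<in> flags Y"
    then show "mF \<phi> f = mF (mcomp (flags ?T) \<psi> (v_morph ?G)) f"
      using mFid by (simp add: mcomp_def v_morph_def c_morph_def i_morph_def \<psi>_def)
  next
    fix f assume f: "f \<in> flags X - mF \<phi> ` flags Y"
    have imgF: "mF \<phi> ` flags Y = flags Y" using pure_img[OF P] .
    have fX: "f \<in> flags X" "f \<notin> flags Y" using f imgF by auto
    have ii: "inv_into (flags ?G) id f = f"
      using fX by (intro inv_into_f_eq) (auto simp: ghost_def)
    show "mi \<phi> f = mi (mcomp (flags ?T) \<psi> (v_morph ?G)) f"
      using fX fT ii ghost_inv[OF P fX(1)]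
      by (simp add: mcomp_def v_morph_def c_morph_def i_morph_def \<psi>_def ghost_def)
  qed
  show ?thesis using iso meq by blast
qed


lemma part3:
  assumes P: "pure X Y \<phi>" and P': "pure X' Y' \<phi>'"
    and ge: "graph_eq (ghost X Y \<phi>) (ghost X' Y' \<phi>')"
  shows "\<exists>\<chi> :: ('v, 'v, 'f, 'f) morph. is_iso Y Y' \<chi> \<and> morph_eq X Y' \<phi>' (mcomp (flags Y) \<chi> \<phi>)"
proof -
  have fX: "flags X' = flags X" and vX: "verts X' = verts X"
    and bdi: "\<forall>f\<in>flags X. bd X f = bd X' f \<and> inv (ghost X Y \<phi>) f = inv (ghost X' Y' \<phi>') f"
    using ge by (auto simp: graph_eq_def ghost_def)
  have aggY: "aggregate Y" and aggY': "aggregate Y'" using pp_aggY[OF P] pp_aggY[OF P'] .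
  have wfX: "wf_graph X" using pp_aggX[OF P] by (simp add: aggregate_def)
  have wfY: "wf_graph Y" and wfY': "wf_graph Y'" using aggY aggY' by (auto simp: aggregate_def)
  have sub: "flags Y \<subseteq> flags X" using pp_sub[OF P] .
  have sub': "flags Y' \<subseteq> flags X" using pp_sub[OF P'] fX by simp
  have fY: "flags Y' = flags Y"
  proof -
    have "f \<in> flags Y \<longleftrightarrow> f \<in> flags Y'" if "f \<in> flags X" for f
      using ghost_fix[OF P that] ghost_fix[OF P', of f] that fX bdi by auto
    then show ?thesis using sub sub' by blast
  qed
  have mieq: "mi \<phi> f = mi \<phi>' f" if "f \<in> flags X" "f \<notin> flags Y" for f
    using ghost_inv[OF P that(1)] ghost_inv[OF P', of f] that fX fY bdi by auto
  have miX: "\<forall>f\<in>flags X - flags Y. mi \<phi> f \<in> flags X \<and> mi \<phi> f \<noteq> f" using pp_mi[OF P] .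
  have bdX: "bd X f \<in> verts X" if "f \<in> flags X" for f using wfX that by (simp add: wf_graph_def)
  have Releq: "Rel X' Y' \<phi>' = Rel X Y \<phi>"
  proof -
    have e: "(bd X' f, bd X' (mi \<phi>' f)) = (bd X f, bd X (mi \<phi> f))" if "f \<in> flags X - flags Y" for f
      using that mieq miX bdi by auto
    show ?thesis unfolding Rel_def fX fY by (rule Collect_cong) (metis e)
  qed
  have key: "mV \<phi> x = mV \<phi> y \<longleftrightarrow> mV \<phi>' x = mV \<phi>' y" if "x \<in> verts X" "y \<in> verts X" for x y
    using pp_key[OF P] pp_key[OF P'] that vX Releq by simp
  define \<chi> :: "('v, 'v, 'f, 'f) morph" where
    "\<chi> = \<lparr> mV = \<lambda>y. mV \<phi>' (SOME x. x \<in> verts X \<and> mV \<phi> x = y), mF = id, mi = id \<rparr>"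
  have star: "mV \<chi> (mV \<phi> x) = mV \<phi>' x" if "x \<in> verts X" for x
  proof -
    have "\<exists>x'. x' \<in> verts X \<and> mV \<phi> x' = mV \<phi> x" using that by blast
    then have "(SOME x'. x' \<in> verts X \<and> mV \<phi> x' = mV \<phi> x) \<in> verts X \<and> mV \<phi> (SOME x'. x' \<in> verts X \<and> mV \<phi> x' = mV \<phi> x) = mV \<phi> x"
      by (rule someI_ex)
    then have "mV \<phi>' (SOME x'. x' \<in> verts X \<and> mV \<phi> x' = mV \<phi> x) = mV \<phi>' x"
      using key[OF _ that] by blast
    then show ?thesis by (simp add: \<chi>_def)
  qed
  have img: "mV \<phi> ` verts X = verts Y" using pp_img[OF P] .
  have img': "mV \<phi>' ` verts X = verts Y'" using pp_img[OF P'] vX by simp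
  have imgC: "mV \<chi> ` verts Y = verts Y'"
    unfolding img[symmetric] image_image using star img' by (metis (no_types, lifting) image_cong)
  have injC: "inj_on (mV \<chi>) (verts Y)"
  proof (rule inj_onI)
    fix a b assume "a \<in> verts Y" "b \<in> verts Y" "mV \<chi> a = mV \<chi> b"
    then obtain x y where xy: "x \<in> verts X" "y \<in> verts X" "a = mV \<phi> x" "b = mV \<phi> y"
      "mV \<chi> a = mV \<chi> b" unfolding img[symmetric] by auto
    then show "a = b" using star key by simp
  qed
  have bdY: "\<forall>f\<in>flags Y. bd Y f = mV \<phi> (bd X f)" using pp_bd[OF P] .
  have bdY': "\<forall>f\<in>flags Y'. bd Y' f = mV \<phi>' (bd X' f)" using pp_bd[OF P'] .
  have morph: "is_morph Y Y' \<chi>"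
    unfolding is_morph_def
  proof (intro conjI)
    show "wf_graph Y" by (rule wfY)
    show "wf_graph Y'" by (rule wfY')
    show "mV \<chi> ` verts Y = verts Y'" by (rule imgC)
    show "mF \<chi> ` flags Y' \<subseteq> flags Y" using fY by (simp add: \<chi>_def)
    show "inj_on (mF \<chi>) (flags Y')" by (simp add: \<chi>_def)
    show "\<forall>f\<in>flags Y - mF \<chi> ` flags Y'. mi \<chi> f \<in> flags Y - mF \<chi> ` flags Y' \<and> mi \<chi> f \<noteq> f \<and> mi \<chi> (mi \<chi> f) = f"
      using fY by (simp add: \<chi>_def)
    show "\<forall>f'\<in>flags Y'. mV \<chi> (bd Y (mF \<chi> f')) = bd Y' f'"
    proof
      fix f assume f: "f \<in> flags Y'"
      then have "f \<in> flags Y" "f \<in> flags X" using fY sub by auto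
      then show "mV \<chi> (bd Y (mF \<chi> f)) = bd Y' f"
        using f bdY bdY' star[OF bdX] bdi by (simp add: \<chi>_def)
    qed
    show "\<forall>f\<in>flags Y - mF \<chi> ` flags Y'. mV \<chi> (bd Y f) = mV \<chi> (bd Y (mi \<chi> f))"
      using fY by (simp add: \<chi>_def)
    show "\<forall>f\<in>flags Y - mF \<chi> ` flags Y'. (inv Y f \<noteq> f \<and> mi \<chi> f = inv Y f) \<or> (inv Y f = f \<and> inv Y (mi \<chi> f) = mi \<chi> f)"
      using fY by (simp add: \<chi>_def)
    show "\<forall>f'\<in>flags Y'. inv Y (mF \<chi> f') \<noteq> mF \<chi> f' \<longrightarrow> inv Y (mF \<chi> f') = mF \<chi> (inv Y' f')"
      using aggY fY by (simp add: \<chi>_def aggregate_def)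
  qed
  have iso: "is_iso Y Y' \<chi>"
    unfolding is_iso_def using morph injC imgC fY
    by (simp add: bij_betw_def \<chi>_def)
  have mFid: "\<forall>f\<in>flags Y. mF \<phi> f = f" using pp_mF[OF P] .
  have mFid': "\<forall>f\<in>flags Y'. mF \<phi>' f = f" using pp_mF[OF P'] .
  have imgF': "mF \<phi>' ` flags Y' = flags Y'" using pure_img[OF P'] .
  have imgF: "mF \<phi> ` flags Y = flags Y" using pure_img[OF P] .
  have meq: "morph_eq X Y' \<phi>' (mcomp (flags Y) \<chi> \<phi>)"
    unfolding morph_eq_def
  proof (intro conjI ballI)
    fix v assume "v \<in> verts X"
    then show "mV \<phi>' v = mV (mcomp (flags Y) \<chi> \<phi>) v" using star by (simp add: mcomp_def)
  next
    fix f assume "f \<in> flags Y'"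
    then show "mF \<phi>' f = mF (mcomp (flags Y) \<chi> \<phi>) f"
      using mFid mFid' fY by (simp add: mcomp_def \<chi>_def)
  next
    fix f assume f: "f \<in> flags X - mF \<phi>' ` flags Y'"
    then have "f \<in> flags X" "f \<notin> flags Y" using imgF' fY by auto
    then show "mi \<phi>' f = mi (mcomp (flags Y) \<chi> \<phi>) f"
      using mieq imgF by (simp add: mcomp_def)
  qed
  show ?thesis using iso meq by blast
qed

theorem corollary2p10:
  fixes X Y :: "('f, 'v) graph" and \<phi> :: "('v, 'v, 'f, 'f) morph"
  assumes "pure X Y \<phi>"
  shows "graph_eq X (agg (ghost X Y \<phi>))
       \<and> (\<exists>\<psi> :: ('v set, 'v, 'f, 'f) morph.
            is_iso (tot_contr (ghost X Y \<phi>)) Y \<psi>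
          \<and> morph_eq X Y \<phi> (mcomp (flags (tot_contr (ghost X Y \<phi>))) \<psi> (v_morph (ghost X Y \<phi>))))
       \<and> (\<forall>X' Y' (\<phi>' :: ('v, 'v, 'f, 'f) morph).
            pure X' Y' \<phi>' \<and> graph_eq (ghost X Y \<phi>) (ghost X' Y' \<phi>') \<longrightarrow>
            (\<exists>\<chi> :: ('v, 'v, 'f, 'f) morph. is_iso Y Y' \<chi> \<and> morph_eq X Y' \<phi>' (mcomp (flags Y) \<chi> \<phi>)))"
  using part1[OF assms] part2[OF assms] part3[OF assms] by blast

end
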